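(* (a) Let $(Q,\cdot)$ be a Ward quasigroup with $xx=e$ for all $x$. Put $x\star y=(e\cdot x)\cdot y$ and then $x\bullet y=(e\star x)\star y$. Then $x\bullet y=x\cdot y$ for all $x,y\in Q$. (b) Let $(Q,\star,e)$ be a double Ward quasigroup. Put $x\bullet y=(e\star x)\star y$ and then $x\diamond y=(e\bullet x)\bullet y$. Then $x\diamond y=x\star y$ for all $x,y\in Q$.
   Context: A quasigroup is a magma in which $ax=b$ and $ya=b$ have unique solutions for all $a,b$. A Ward quasigroup is a quasigroup satisfying $(xz)(yz)=xy$ for all $x,y,z$; it has an element $e$ with $xx=e$ for all $x$. A double Ward quasigroup $(Q,\star,e)$ is a quasigroup with an element $e$ such that $((e\star e)\star(x\star z))\star((e\star y)\star z)=x\star y$ for all $x,y,z$. *)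

theory Defs
  imports Main
begin

definition quasigroup :: "('a \<Rightarrow> 'a \<Rightarrow> 'a) \<Rightarrow> bool" where
  "quasigroup m \<longleftrightarrow> (\<forall>a b. (\<exists>!x. m a x = b) \<and> (\<exists>!y. m y a = b))"

definition ward_quasigroup :: "('a \<Rightarrow> 'a \<Rightarrow> 'a) \<Rightarrow> bool" where
  "ward_quasigroup m \<longleftrightarrow> quasigroup m \<and> (\<forall>x y z. m (m x z) (m y z) = m x y)"

definition double_ward_quasigroup :: "('a \<Rightarrow> 'a \<Rightarrow> 'a) \<Rightarrow> 'a \<Rightarrow> bool" where
  "double_ward_quasigroup m e \<longleftrightarrow> quasigroup m \<and>
     (\<forall>x y z. m (m (m e e) (m x z)) (m (m e y) z) = m x y)"

end

theory Submission
  imports Defs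
begin

lemma qg_ld:
  assumes "quasigroup s"
  obtains ld where "\<And>a b. s a (ld a b) = b"
proof -
  have "\<forall>a b. \<exists>x. s a x = b" using assms unfolding quasigroup_def by blast
  then obtain f where "\<forall>a b. s a (f a b) = b" by metis
  then show ?thesis using that by blast
qed

lemma partA:
  assumes "ward_quasigroup m" and ee: "\<And>x. m x x = e"
  shows "m (m e (m e x)) y = m x y"
proof -
  have q: "quasigroup m" and w: "\<And>x y z. m (m x z) (m y z) = m x y"
    using assms(1) unfolding ward_quasigroup_def by auto
  obtain ld where l1: "\<And>a b. m a (ld a b) = b" using qg_ld[OF q] by blast
  have re: "\<And>u. m u e = u" by (metis w ee l1)
  have "m e (m e x) = x" by (metis w ee re)
  then show ?thesis by simp
qed

lemma partB:
  assumes "double_ward_quasigroup s e"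
  shows "s (s e (s (s e e) x)) y = s x y"
proof -
  have q: "quasigroup s" and ax: "\<And>x y z. s (s (s e e) (s x z)) (s (s e y) z) = s x y"
    using assms unfolding double_ward_quasigroup_def by auto
  obtain ld where l1: "\<And>a b. s a (ld a b) = b" using qg_ld[OF q] by blast
  have "s e (s (s e e) x) = x" by (metis ax l1)
  then show ?thesis by simp
qed

theorem theorem4p4:
  shows "(\<forall>(m :: 'a \<Rightarrow> 'a \<Rightarrow> 'a) e.
            ward_quasigroup m \<and> (\<forall>x. m x x = e) \<longrightarrow>
            (let star = (\<lambda>x y. m (m e x) y);
                 bullet = (\<lambda>x y. star (star e x) y)
             in \<forall>x y. bullet x y = m x y))
       \<and> (\<forall>(s :: 'b \<Rightarrow> 'b \<Rightarrow> 'b) e.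
            double_ward_quasigroup s e \<longrightarrow>
            (let bullet = (\<lambda>x y. s (s e x) y);
                 diamond = (\<lambda>x y. bullet (bullet e x) y)
             in \<forall>x y. diamond x y = s x y))"
  unfolding Let_def
proof (intro conjI allI impI)
  fix m :: "'a \<Rightarrow> 'a \<Rightarrow> 'a" and e x y
  assume "ward_quasigroup m \<and> (\<forall>x. m x x = e)"
  then show "m (m e (m (m e e) x)) y = m x y" using partA[of m e x y] by simp
next
  fix s :: "'b \<Rightarrow> 'b \<Rightarrow> 'b" and e x y
  assume "double_ward_quasigroup s e"
  then show "s (s e (s (s e e) x)) y = s x y" by (rule partB)
qed

end
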